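(* Let $\mathcal A$ be a Banach algebra and $I$ a closed two-sided ideal of $\mathcal A$ with $\mathcal A^2\subseteq I$. If $\mathcal A$ is $I$-weakly amenable, then $\mathcal A^2$ is dense in $I$.
   Context: $\mathcal A^2$ denotes the linear span of $\{ab:a,b\in\mathcal A\}$. $I^*$ is a Banach $\mathcal A$-bimodule with $\langle x,a\cdot f\rangle=\langle xa,f\rangle$, $\langle x,f\cdot a\rangle=\langle ax,f\rangle$. $\mathcal A$ is $I$-weakly amenable if every derivation $D:\mathcal A\to I^*$ (continuous linear map with $D(ab)=a\cdot D(b)+D(a)\cdot b$) is inner, i.e. $D(a)=a\cdot f-f\cdot a$ for some $f\in I^*$. *)

theory Defs
  imports "HOL-Analysis.Analysis"
begin

text \<open>Banach algebras are modelled by the type class real_normed_algebra + banach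
  (real scalars, not necessarily unital or commutative).\<close>

definition closed_two_sided_ideal :: "'a::{real_normed_algebra,banach} set \<Rightarrow> bool" where
  "closed_two_sided_ideal I \<longleftrightarrow> subspace I \<and> closed I \<and>
     (\<forall>a x. x \<in> I \<longrightarrow> a * x \<in> I \<and> x * a \<in> I)"

text \<open>Elements of the dual space I^*: bounded linear functionals on the subspace I
  (a function on the whole algebra, only its values on I matter).\<close>
definition dual_elem :: "'a::real_normed_vector set \<Rightarrow> ('a \<Rightarrow> real) \<Rightarrow> bool" where
  "dual_elem I f \<longleftrightarrow> (\<forall>x\<in>I. \<forall>y\<in>I. f (x + y) = f x + f y) \<and>
     (\<forall>c. \<forall>x\<in>I. f (c *\<^sub>R x) = c * f x) \<and>
     (\<exists>K. \<forall>x\<in>I. \<bar>f x\<bar> \<le> K * norm x)"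

definition lmod :: "'a::real_normed_algebra \<Rightarrow> ('a \<Rightarrow> real) \<Rightarrow> ('a \<Rightarrow> real)" where
  "lmod a f = (\<lambda>x. f (x * a))"

definition rmod :: "('a \<Rightarrow> real) \<Rightarrow> 'a::real_normed_algebra \<Rightarrow> ('a \<Rightarrow> real)" where
  "rmod f a = (\<lambda>x. f (a * x))"

text \<open>Continuous derivations D : A \<rightarrow> I^*; equalities in I^* are equalities on I.\<close>
definition ideal_derivation ::
  "'a::{real_normed_algebra,banach} set \<Rightarrow> ('a \<Rightarrow> 'a \<Rightarrow> real) \<Rightarrow> bool" where
  "ideal_derivation I D \<longleftrightarrow>
     (\<forall>a. dual_elem I (D a)) \<and>
     (\<forall>a b. \<forall>x\<in>I. D (a + b) x = D a x + D b x) \<and>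
     (\<forall>c a. \<forall>x\<in>I. D (c *\<^sub>R a) x = c * D a x) \<and>
     (\<exists>K. \<forall>a. \<forall>x\<in>I. \<bar>D a x\<bar> \<le> K * norm a * norm x) \<and>
     (\<forall>a b. \<forall>x\<in>I. D (a * b) x = lmod a (D b) x + rmod (D a) b x)"

definition inner_ideal_derivation ::
  "'a::{real_normed_algebra,banach} set \<Rightarrow> ('a \<Rightarrow> 'a \<Rightarrow> real) \<Rightarrow> bool" where
  "inner_ideal_derivation I D \<longleftrightarrow>
     (\<exists>f. dual_elem I f \<and> (\<forall>a. \<forall>x\<in>I. D a x = lmod a f x - rmod f a x))"

definition I_weakly_amenable :: "'a::{real_normed_algebra,banach} set \<Rightarrow> bool" where
  "I_weakly_amenable I \<longleftrightarrow>
     (\<forall>D. ideal_derivation I D \<longrightarrow> inner_ideal_derivation I D)"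

definition alg_square :: "'a::real_normed_algebra set" where
  "alg_square = span {a * b | a b. True}"

end

theory Submission
  imports Defs
begin

definition good :: "('a::real_normed_vector \<times> real) set \<Rightarrow> bool" where
 "good G \<longleftrightarrow> (\<forall>x a b. (x,a)\<in>G \<longrightarrow> (x,b)\<in>G \<longrightarrow> a=b) \<and>
   (\<forall>x y a b. (x,a)\<in>G \<longrightarrow> (y,b)\<in>G \<longrightarrow> (x+y,a+b)\<in>G) \<and>
   (\<forall>x a c. (x,a)\<in>G \<longrightarrow> (c *\<^sub>R x, c*a)\<in>G) \<and>
   (\<forall>x a. (x,a)\<in>G \<longrightarrow> a \<le> norm x)"

lemma good_ext:
  fixes G :: "('a::real_normed_vector \<times> real) set"
  assumes g: "good G" and ne: "G \<noteq> {}" and y: "y \<notin> fst ` G"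
  shows "\<exists>G'. good G' \<and> G \<subset> G'"
proof -
  have fn1: "\<And>x a b. (x,a)\<in>G \<Longrightarrow> (x,b)\<in>G \<Longrightarrow> a=b"
   and add: "\<And>x y a b. (x,a)\<in>G \<Longrightarrow> (y,b)\<in>G \<Longrightarrow> (x+y,a+b)\<in>G"
   and scl: "\<And>x a c. (x,a)\<in>G \<Longrightarrow> (c *\<^sub>R x, c*a)\<in>G"
   and bnd: "\<And>x a. (x,a)\<in>G \<Longrightarrow> a \<le> norm x" using g unfolding good_def by blast+
  define T where "T = {a - norm (u - y) | u a. (u,a) \<in> G}"
  define c where "c = Sup T"
  have key: "a - norm (u - y) \<le> norm (v + y) - b" if "(u,a)\<in>G" "(v,b)\<in>G" for u a v b
  proof -
    have "a + b \<le> norm (u + v)" using bnd add that by blast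
    also have "\<dots> = norm ((u - y) + (v + y))" by simp
    also have "\<dots> \<le> norm (u - y) + norm (v + y)" by (rule norm_triangle_ineq)
    finally show ?thesis by simp
  qed
  obtain u0 a0 where u0: "(u0,a0) \<in> G" using ne by auto
  have Tne: "T \<noteq> {}" using u0 unfolding T_def by blast
  have Tbd: "bdd_above T" unfolding T_def bdd_above_def using key u0 by blast
  have c1: "a - norm (u - y) \<le> c" if "(u,a)\<in>G" for u a
    unfolding c_def by (rule cSup_upper) (use that Tbd T_def in auto)
  have c2: "c \<le> norm (v + y) - b" if "(v,b)\<in>G" for v b
    unfolding c_def by (rule cSup_least) (use that Tne T_def key in auto)
  define G' where "G' = {(s + t *\<^sub>R y, a + t * c) | s a t. (s,a) \<in> G}"
  have z: "(0,0) \<in> G" using scl[OF u0, of 0] by simp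
  have sub: "G \<subseteq> G'" unfolding G'_def by force
  have yin: "(y, c) \<in> G'" unfolding G'_def using z by force
  have neq: "G \<noteq> G'" using yin y by force
  have "good G'"
    unfolding good_def
  proof (intro conjI allI impI)
    fix x a b assume "(x,a) \<in> G'" "(x,b) \<in> G'"
    then obtain s1 a1 t1 s2 a2 t2 where 1: "(s1,a1)\<in>G" "x = s1 + t1 *\<^sub>R y" "a = a1 + t1 * c"
      and 2: "(s2,a2)\<in>G" "x = s2 + t2 *\<^sub>R y" "b = a2 + t2 * c" unfolding G'_def by blast
    have m: "(s2 + (-1) *\<^sub>R s1, a2 + (-1) * a1) \<in> G" using add[OF 2(1) scl[OF 1(1)]] .
    have t: "t1 = t2"
    proof (rule ccontr)
      assume ne: "t1 \<noteq> t2"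
      have "(t1 - t2) *\<^sub>R y = s2 + (-1) *\<^sub>R s1" using 1 2 by (simp add: algebra_simps)
      hence "(1/(t1 - t2)) *\<^sub>R ((t1 - t2) *\<^sub>R y) = (1/(t1 - t2)) *\<^sub>R (s2 + (-1) *\<^sub>R s1)" by simp
      hence "y = (1/(t1 - t2)) *\<^sub>R (s2 + (-1) *\<^sub>R s1)" using ne by simp
      hence "y \<in> fst ` G" using scl[OF m, of "1/(t1-t2)"] by force
      thus False using y by simp
    qed
    hence "s1 = s2" using 1 2 by simp
    hence "a1 = a2" using fn1 1 2 by blast
    thus "a = b" using 1 2 t by simp
  next
    fix x1 x2 a b assume "(x1,a) \<in> G'" "(x2,b) \<in> G'"
    then obtain s1 a1 t1 s2 a2 t2 where 1: "(s1,a1)\<in>G" "x1 = s1 + t1 *\<^sub>R y" "a = a1 + t1 * c"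
      and 2: "(s2,a2)\<in>G" "x2 = s2 + t2 *\<^sub>R y" "b = a2 + t2 * c" unfolding G'_def by blast
    have "(s1 + s2, a1 + a2) \<in> G" using add 1 2 by blast
    moreover have "x1 + x2 = (s1 + s2) + (t1 + t2) *\<^sub>R y" "a + b = (a1 + a2) + (t1 + t2) * c"
      using 1 2 by (simp_all add: algebra_simps)
    ultimately show "(x1 + x2, a + b) \<in> G'" unfolding G'_def by blast
  next
    fix x a r assume "(x,a) \<in> G'"
    then obtain s1 a1 t1 where 1: "(s1,a1)\<in>G" "x = s1 + t1 *\<^sub>R y" "a = a1 + t1 * c"
      unfolding G'_def by blast
    have "(r *\<^sub>R s1, r * a1) \<in> G" using scl 1 by blast
    moreover have "r *\<^sub>R x = r *\<^sub>R s1 + (r * t1) *\<^sub>R y" "r * a = r * a1 + (r * t1) * c"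
      using 1 by (simp_all add: algebra_simps)
    ultimately show "(r *\<^sub>R x, r * a) \<in> G'" unfolding G'_def by blast
  next
    fix x a assume "(x,a) \<in> G'"
    then obtain s a1 t where 1: "(s,a1)\<in>G" "x = s + t *\<^sub>R y" "a = a1 + t * c"
      unfolding G'_def by blast
    consider "t = 0" | "t > 0" | "t < 0" by linarith
    thus "a \<le> norm x"
    proof cases
      case 1 thus ?thesis using \<open>(s,a1)\<in>G\<close> bnd \<open>x = s + t *\<^sub>R y\<close> \<open>a = a1 + t * c\<close> by simp
    next
      case 2
      have "((1/t) *\<^sub>R s, (1/t) * a1) \<in> G" using scl 1 by blast
      hence "c \<le> norm ((1/t) *\<^sub>R s + y) - (1/t) * a1" by (rule c2)
      hence "t * c \<le> t * norm ((1/t) *\<^sub>R s + y) - a1" using 2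
        by (simp add: field_simps)
      also have "t * norm ((1/t) *\<^sub>R s + y) = norm (t *\<^sub>R ((1/t) *\<^sub>R s + y))" using 2 by simp
      also have "t *\<^sub>R ((1/t) *\<^sub>R s + y) = x" using 2 1 by (simp add: algebra_simps)
      finally show ?thesis using 1 by simp
    next
      case 3
      define r where "r = - t"
      have r: "r > 0" using 3 r_def by simp
      have "((1/r) *\<^sub>R s, (1/r) * a1) \<in> G" using scl 1 by blast
      hence "(1/r) * a1 - norm ((1/r) *\<^sub>R s - y) \<le> c" by (rule c1)
      hence "a1 - r * norm ((1/r) *\<^sub>R s - y) \<le> r * c" using r
        by (simp add: field_simps)
      also have "r * norm ((1/r) *\<^sub>R s - y) = norm (r *\<^sub>R ((1/r) *\<^sub>R s - y))" using r by simp
      also have "r *\<^sub>R ((1/r) *\<^sub>R s - y) = x" using r 1 r_def by (simp add: algebra_simps)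
      finally show ?thesis using 1 r_def by simp
    qed
  qed
  thus ?thesis using sub neq by blast
qed

lemma good_total:
  fixes G0 :: "('a::real_normed_vector \<times> real) set"
  assumes g: "good G0" and ne: "G0 \<noteq> {}"
  shows "\<exists>G. good G \<and> G0 \<subseteq> G \<and> (\<forall>x. \<exists>a. (x,a) \<in> G)"
proof -
  define A where "A = {G :: ('a \<times> real) set. good G \<and> G0 \<subseteq> G}"
  have "\<exists>M\<in>A. \<forall>X\<in>A. M \<subseteq> X \<longrightarrow> X = M"
  proof (rule subset_Zorn_nonempty)
    show "A \<noteq> {}" using g unfolding A_def by blast
  next
    fix C assume Cne: "C \<noteq> {}" and ch: "subset.chain A C"
    have CA: "C \<subseteq> A" and tot: "\<And>X Y. X \<in> C \<Longrightarrow> Y \<in> C \<Longrightarrow> X \<subseteq> Y \<or> Y \<subseteq> X"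
      using ch unfolding subset_chain_def by blast+
    have gC: "\<And>X. X \<in> C \<Longrightarrow> good X" using CA unfolding A_def by blast
    have two: "\<exists>Z\<in>C. p \<in> Z \<and> q \<in> Z" if pq: "p \<in> \<Union>C" "q \<in> \<Union>C" for p q
    proof -
      obtain X Y where "X\<in>C" "Y\<in>C" "p\<in>X" "q\<in>Y" using pq by blast
      thus ?thesis using tot[of X Y] by blast
    qed
    have "good (\<Union>C)"
      unfolding good_def
    proof (intro conjI allI impI)
      fix x a b assume "(x,a) \<in> \<Union>C" "(x,b) \<in> \<Union>C"
      then obtain Z where "Z \<in> C" "(x,a)\<in>Z" "(x,b)\<in>Z" using two by blast
      thus "a = b" using gC unfolding good_def by blast
    next
      fix x y a b assume "(x,a) \<in> \<Union>C" "(y,b) \<in> \<Union>C"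
      then obtain Z where "Z \<in> C" "(x,a)\<in>Z" "(y,b)\<in>Z" using two by blast
      thus "(x+y,a+b) \<in> \<Union>C" using gC unfolding good_def by blast
    next
      fix x a c assume "(x,a) \<in> \<Union>C"
      then obtain Z where "Z \<in> C" "(x,a)\<in>Z" by blast
      thus "(c *\<^sub>R x, c*a) \<in> \<Union>C" using gC unfolding good_def by blast
    next
      fix x a assume "(x,a) \<in> \<Union>C"
      then obtain Z where "Z \<in> C" "(x,a)\<in>Z" by blast
      thus "a \<le> norm x" using gC unfolding good_def by blast
    qed
    moreover have "G0 \<subseteq> \<Union>C" using Cne CA unfolding A_def by blast
    ultimately show "\<Union>C \<in> A" unfolding A_def by blast
  qed
  then obtain G where GA: "G \<in> A" and mx: "\<And>X. X \<in> A \<Longrightarrow> G \<subseteq> X \<Longrightarrow> X = G" by blast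
  have "\<forall>x. \<exists>a. (x,a) \<in> G"
  proof (rule ccontr)
    assume "\<not> (\<forall>x. \<exists>a. (x,a) \<in> G)"
    then obtain y where y: "y \<notin> fst ` G" by force
    have "G \<noteq> {}" using GA ne unfolding A_def by blast
    then obtain G' where "good G'" "G \<subset> G'" using good_ext[OF _ _ y] GA unfolding A_def by blast
    moreover hence "G' \<in> A" using GA unfolding A_def by blast
    ultimately show False using mx by blast
  qed
  thus ?thesis using GA unfolding A_def by blast
qed

lemma closure_subspace_aux:
  fixes S :: "'a::real_normed_vector set"
  assumes "subspace S"
  shows "subspace (closure S)"
  unfolding subspace_def
proof (intro conjI ballI allI)
  show "0 \<in> closure S" using assms closure_subset subspace_0 by blast
next
  fix x y assume "x \<in> closure S" "y \<in> closure S"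
  then obtain f g where f: "\<forall>n. f n \<in> S" "f \<longlonglongrightarrow> x" and g: "\<forall>n. g n \<in> S" "g \<longlonglongrightarrow> y"
    unfolding closure_sequential by blast
  have "\<forall>n. f n + g n \<in> S" using f g assms subspace_add by blast
  moreover have "(\<lambda>n. f n + g n) \<longlonglongrightarrow> x + y" using f g tendsto_add by blast
  ultimately show "x + y \<in> closure S" unfolding closure_sequential by (intro exI[of _ "\<lambda>n. f n + g n"]) simp
next
  fix c :: real and x assume "x \<in> closure S"
  then obtain f where f: "\<forall>n. f n \<in> S" "f \<longlonglongrightarrow> x"
    unfolding closure_sequential by blast
  have "\<forall>n. c *\<^sub>R f n \<in> S" using f assms subspace_scale by blast
  moreover have "(\<lambda>n. c *\<^sub>R f n) \<longlonglongrightarrow> c *\<^sub>R x" using f tendsto_scaleR tendsto_const by blast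
  ultimately show "c *\<^sub>R x \<in> closure S" unfolding closure_sequential by (intro exI[of _ "\<lambda>n. c *\<^sub>R f n"]) simp
qed

lemma separating_functional:
  fixes M :: "'a::real_normed_vector set"
  assumes sM: "subspace M" and cM: "closed M" and x0: "x0 \<notin> M"
  shows "\<exists>f. (\<forall>x y. f (x + y) = f x + f y) \<and> (\<forall>c x. f (c *\<^sub>R x) = c * f x) \<and>
     (\<forall>x. \<bar>f x\<bar> \<le> norm x) \<and> (\<forall>m\<in>M. f m = 0) \<and> f x0 \<noteq> 0"
proof -
  define d where "d = infdist x0 M"
  have M0: "0 \<in> M" using sM subspace_0 by blast
  have "d \<noteq> 0" using in_closed_iff_infdist_zero[OF cM, of x0] M0 x0 d_def by auto
  hence dpos: "d > 0" using infdist_nonneg[of x0 M] d_def by simp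
  define G0 where "G0 = {(m + t *\<^sub>R x0, t * d) | m t. m \<in> M}"
  have "good G0"
    unfolding good_def
  proof (intro conjI allI impI)
    fix x a b assume "(x,a) \<in> G0" "(x,b) \<in> G0"
    then obtain m1 t1 m2 t2 where 1: "m1 \<in> M" "x = m1 + t1 *\<^sub>R x0" "a = t1 * d"
      and 2: "m2 \<in> M" "x = m2 + t2 *\<^sub>R x0" "b = t2 * d" unfolding G0_def by blast
    have t: "t1 = t2"
    proof (rule ccontr)
      assume ne: "t1 \<noteq> t2"
      have "(t1 - t2) *\<^sub>R x0 = m2 - m1" using 1 2 by (simp add: algebra_simps)
      hence "(1/(t1 - t2)) *\<^sub>R ((t1 - t2) *\<^sub>R x0) = (1/(t1 - t2)) *\<^sub>R (m2 - m1)" by simp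
      hence "x0 = (1/(t1 - t2)) *\<^sub>R (m2 - m1)" using ne by simp
      moreover have "(1/(t1 - t2)) *\<^sub>R (m2 - m1) \<in> M"
        using 1 2 sM subspace_scale subspace_diff by blast
      ultimately show False using x0 by simp
    qed
    thus "a = b" using 1 2 by simp
  next
    fix x y a b assume "(x,a) \<in> G0" "(y,b) \<in> G0"
    then obtain m1 t1 m2 t2 where 1: "m1 \<in> M" "x = m1 + t1 *\<^sub>R x0" "a = t1 * d"
      and 2: "m2 \<in> M" "y = m2 + t2 *\<^sub>R x0" "b = t2 * d" unfolding G0_def by blast
    have "m1 + m2 \<in> M" using 1 2 sM subspace_add by blast
    moreover have "x + y = (m1 + m2) + (t1 + t2) *\<^sub>R x0" "a + b = (t1 + t2) * d"
      using 1 2 by (simp_all add: algebra_simps)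
    ultimately show "(x + y, a + b) \<in> G0" unfolding G0_def by blast
  next
    fix x a c assume "(x,a) \<in> G0"
    then obtain m1 t1 where 1: "m1 \<in> M" "x = m1 + t1 *\<^sub>R x0" "a = t1 * d" unfolding G0_def by blast
    have "c *\<^sub>R m1 \<in> M" using 1 sM subspace_scale by blast
    moreover have "c *\<^sub>R x = c *\<^sub>R m1 + (c * t1) *\<^sub>R x0" "c * a = (c * t1) * d"
      using 1 by (simp_all add: algebra_simps)
    ultimately show "(c *\<^sub>R x, c * a) \<in> G0" unfolding G0_def by blast
  next
    fix x a assume "(x,a) \<in> G0"
    then obtain m t where 1: "m \<in> M" "x = m + t *\<^sub>R x0" "a = t * d" unfolding G0_def by blast
    show "a \<le> norm x"
    proof (cases "t > 0")
      case False
      hence "a \<le> 0" using 1 dpos by (simp add: mult_nonpos_nonneg)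
      thus ?thesis by (meson norm_ge_zero order_trans)
    next
      case True
      have "- (1/t) *\<^sub>R m \<in> M" using 1 sM subspace_scale subspace_neg by blast
      hence "d \<le> dist x0 (- (1/t) *\<^sub>R m)" unfolding d_def by (rule infdist_le)
      also have "\<dots> = norm (x0 + (1/t) *\<^sub>R m)" by (simp add: dist_norm)
      finally have "t * d \<le> t * norm (x0 + (1/t) *\<^sub>R m)" using True by simp
      also have "\<dots> = norm (t *\<^sub>R (x0 + (1/t) *\<^sub>R m))" using True by simp
      also have "t *\<^sub>R (x0 + (1/t) *\<^sub>R m) = x" using True 1 by (simp add: algebra_simps)
      finally show ?thesis using 1 by simp
    qed
  qed
  moreover have "G0 \<noteq> {}" unfolding G0_def using M0 by blast
  ultimately obtain G where gG: "good G" and sub: "G0 \<subseteq> G" and tot: "\<forall>x. \<exists>a. (x,a) \<in> G"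
    using good_total by blast
  have fn1: "\<And>x a b. (x,a)\<in>G \<Longrightarrow> (x,b)\<in>G \<Longrightarrow> a=b"
   and add: "\<And>x y a b. (x,a)\<in>G \<Longrightarrow> (y,b)\<in>G \<Longrightarrow> (x+y,a+b)\<in>G"
   and scl: "\<And>x a c. (x,a)\<in>G \<Longrightarrow> (c *\<^sub>R x, c*a)\<in>G"
   and bnd: "\<And>x a. (x,a)\<in>G \<Longrightarrow> a \<le> norm x" using gG unfolding good_def by blast+
  define f where "f x = (THE a. (x,a) \<in> G)" for x
  have fG: "(x, f x) \<in> G" for x
  proof -
    obtain a where a: "(x,a) \<in> G" using tot by blast
    have "(THE a. (x,a) \<in> G) = a" using a fn1 by blast
    thus ?thesis using a f_def by simp
  qed
  have fv: "(x,a) \<in> G \<Longrightarrow> f x = a" for x a using fG fn1 by blast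
  have f_add: "\<forall>x y. f (x + y) = f x + f y" using fv add fG by blast
  have f_scl: "\<forall>c x. f (c *\<^sub>R x) = c * f x" using fv scl fG by blast
  have f_bnd: "\<forall>x. \<bar>f x\<bar> \<le> norm x"
  proof
    fix x
    have "f x \<le> norm x" using bnd fG by blast
    moreover have "f ((-1) *\<^sub>R x) \<le> norm ((-1) *\<^sub>R x)" using bnd fG by blast
    moreover have "f ((-1) *\<^sub>R x) = - f x" using f_scl[rule_format, of "-1" x] by simp
    ultimately show "\<bar>f x\<bar> \<le> norm x" by simp
  qed
  have f_M: "\<forall>m\<in>M. f m = 0"
  proof
    fix m assume "m \<in> M"
    hence "(m + 0 *\<^sub>R x0, 0 * d) \<in> G0" unfolding G0_def by blast
    thus "f m = 0" using sub fv by auto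
  qed
  have "(0 + 1 *\<^sub>R x0, 1 * d) \<in> G0" unfolding G0_def using M0 by blast
  hence "f x0 = d" using sub fv by auto
  hence "f x0 \<noteq> 0" using dpos by simp
  thus ?thesis using f_add f_scl f_bnd f_M by blast
qed

theorem theorem3p8:
  fixes I :: "'a::{real_normed_algebra,banach} set"
  assumes "closed_two_sided_ideal I"
    and "alg_square \<subseteq> I"
    and "I_weakly_amenable I"
  shows "I \<subseteq> closure (alg_square :: 'a set)"
proof
  fix x0 assume x0I: "x0 \<in> I"
  show "x0 \<in> closure (alg_square :: 'a set)"
  proof (rule ccontr)
    assume nx: "x0 \<notin> closure (alg_square :: 'a set)"
    define M where "M = closure (alg_square :: 'a set)"
    have sM: "subspace M" unfolding M_def alg_square_def
      by (rule closure_subspace_aux) simp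
    obtain f where f_add: "\<forall>x y. f (x + y) = f x + f y" and f_scl: "\<forall>c x. f (c *\<^sub>R x) = c * f x"
      and f_bnd: "\<forall>x. \<bar>f x\<bar> \<le> norm x" and f_M: "\<forall>m\<in>M. f m = 0" and f0: "f x0 \<noteq> 0"
      using separating_functional[OF sM _ nx[folded M_def]] unfolding M_def by blast
    have prod: "f (a * b) = 0" for a b :: 'a
    proof -
      have "a * b \<in> alg_square" unfolding alg_square_def by (rule span_base) blast
      hence "a * b \<in> M" unfolding M_def using closure_subset by blast
      thus ?thesis using f_M by blast
    qed
    define D where "D a x = f a * f x" for a x :: 'a
    have "ideal_derivation I D"
      unfolding ideal_derivation_def
    proof (intro conjI allI ballI)
      fix a
      show "dual_elem I (D a)" unfolding dual_elem_def
      proof (intro conjI allI ballI)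
        show "\<exists>K. \<forall>x\<in>I. \<bar>D a x\<bar> \<le> K * norm x"
        proof (intro exI ballI)
          fix x
          have "\<bar>D a x\<bar> = \<bar>f a\<bar> * \<bar>f x\<bar>" unfolding D_def by (simp add: abs_mult)
          also have "\<dots> \<le> \<bar>f a\<bar> * norm x" using f_bnd by (simp add: mult_left_mono)
          finally show "\<bar>D a x\<bar> \<le> \<bar>f a\<bar> * norm x" .
        qed
      qed (auto simp: D_def f_add f_scl algebra_simps)
    next
      show "\<exists>K. \<forall>a. \<forall>x\<in>I. \<bar>D a x\<bar> \<le> K * norm a * norm x"
      proof (intro exI allI ballI)
        fix a x
        have "\<bar>D a x\<bar> = \<bar>f a\<bar> * \<bar>f x\<bar>" unfolding D_def by (simp add: abs_mult)
        also have "\<dots> \<le> norm a * norm x" using f_bnd by (simp add: mult_mono')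
        finally show "\<bar>D a x\<bar> \<le> 1 * norm a * norm x" by simp
      qed
    qed (auto simp: D_def f_add f_scl algebra_simps lmod_def rmod_def prod)
    then obtain g where "\<forall>a. \<forall>x\<in>I. D a x = lmod a g x - rmod g a x"
      using assms(3) unfolding I_weakly_amenable_def inner_ideal_derivation_def by blast
    hence "D x0 x0 = g (x0 * x0) - g (x0 * x0)" using x0I unfolding lmod_def rmod_def by blast
    hence "f x0 * f x0 = 0" unfolding D_def by simp
    thus False using f0 by simp
  qed
qed

end
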